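(* For any infinite cardinality $\kappa$, $\Delta_{c_0(\kappa)}^{(c)}(R)=2R$ for all $R\in[0,\infty)$.
   Context: For a cardinal $\kappa$, $c_0(\kappa)$ is the space of real families $(x_\xi)_{\xi<\kappa}$ such that $\{\xi: |x_\xi|>\eta\}$ is finite for every $\eta>0$, with the sup norm. For a metric space $X$ and a cover $\mathcal{U}$ of $X$: $\mathrm{diam}(\mathcal{U})=\sup_{U\in\mathcal{U}}\mathrm{diam}(U)$; $\mathcal{L}(\mathcal{U})=\sup\{d\in[0,\infty): \text{every } E\subseteq X \text{ with } \mathrm{diam}(E)<d \text{ is contained in some } U\in\mathcal{U}\}$; $\mathcal{U}$ is point-finite if each point lies in only finitely many members. $\Delta_X^{(c)}(R)=\inf\{\mathrm{diam}(\mathcal{U}): \mathcal{U} \text{ a point-finite cover of } X,\ \mathcal{L}(\mathcal{U})\geq R\}$. *)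

theory Defs
  imports "HOL-Analysis.Analysis"
begin

text \<open>Diameters take values in the extended reals (unbounded sets have diameter \<infinity>);
  the diameter of the empty set is taken to be 0.\<close>

definition set_diam :: "('a \<Rightarrow> 'a \<Rightarrow> real) \<Rightarrow> 'a set \<Rightarrow> ereal" where
  "set_diam d E = Sup ({0} \<union> {ereal (d x y) | x y. x \<in> E \<and> y \<in> E})"

definition is_cover :: "'a set \<Rightarrow> 'a set set \<Rightarrow> bool" where
  "is_cover X \<U> \<longleftrightarrow> (\<forall>U\<in>\<U>. U \<subseteq> X) \<and> \<Union>\<U> = X"

definition point_finite :: "'a set \<Rightarrow> 'a set set \<Rightarrow> bool" where
  "point_finite X \<U> \<longleftrightarrow> (\<forall>x\<in>X. finite {U \<in> \<U>. x \<in> U})"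

definition cover_diam :: "('a \<Rightarrow> 'a \<Rightarrow> real) \<Rightarrow> 'a set set \<Rightarrow> ereal" where
  "cover_diam d \<U> = (SUP U\<in>\<U>. set_diam d U)"

definition lebesgue_num :: "'a set \<Rightarrow> ('a \<Rightarrow> 'a \<Rightarrow> real) \<Rightarrow> 'a set set \<Rightarrow> ereal" where
  "lebesgue_num X d \<U> = Sup {ereal r | r. 0 \<le> r \<and>
     (\<forall>E. E \<subseteq> X \<and> set_diam d E < ereal r \<longrightarrow> (\<exists>U\<in>\<U>. E \<subseteq> U))}"

definition Delta_c :: "'a set \<Rightarrow> ('a \<Rightarrow> 'a \<Rightarrow> real) \<Rightarrow> real \<Rightarrow> ereal" where
  "Delta_c X d R = Inf {cover_diam d \<U> | \<U>. is_cover X \<U> \<and> point_finite X \<U>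
                         \<and> lebesgue_num X d \<U> \<ge> ereal R}"

text \<open>c_0(\<kappa>), where \<kappa> is the cardinality of the index type 'k, with the sup metric.\<close>

definition c0 :: "('k \<Rightarrow> real) set" where
  "c0 = {x. \<forall>\<eta>>0. finite {\<xi>. \<bar>x \<xi>\<bar> > \<eta>}}"

definition sup_dist :: "('k \<Rightarrow> real) \<Rightarrow> ('k \<Rightarrow> real) \<Rightarrow> real" where
  "sup_dist x y = (SUP \<xi>. \<bar>x \<xi> - y \<xi>\<bar>)"

end

theory Submission imports Defs begin

lemma c0_bdd:
  assumes "x \<in> c0"
  shows "\<exists>B. \<forall>\<xi>. \<bar>x \<xi>\<bar> \<le> B"
proof -
  have fin: "finite {\<xi>. \<bar>x \<xi>\<bar> > 1}" using assms unfolding c0_def by auto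
  define B where "B = max 1 (Max (insert 0 ((\<lambda>\<xi>. \<bar>x \<xi>\<bar>) ` {\<xi>. \<bar>x \<xi>\<bar> > 1})))"
  have "\<bar>x \<xi>\<bar> \<le> B" for \<xi>
  proof (cases "\<bar>x \<xi>\<bar> > 1")
    case True
    then have "\<bar>x \<xi>\<bar> \<le> Max (insert 0 ((\<lambda>\<xi>. \<bar>x \<xi>\<bar>) ` {\<xi>. \<bar>x \<xi>\<bar> > 1}))"
      using fin by (intro Max_ge) auto
    then show ?thesis unfolding B_def by linarith
  next
    case False then show ?thesis unfolding B_def by linarith
  qed
  then show ?thesis by blast
qed

lemma sup_dist_ge:
  assumes "x \<in> c0" "y \<in> c0"
  shows "\<bar>x \<xi> - y \<xi>\<bar> \<le> sup_dist x y"
proof -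
  obtain A where A: "\<forall>\<xi>. \<bar>x \<xi>\<bar> \<le> A" using c0_bdd assms(1) by blast
  obtain B where B: "\<forall>\<xi>. \<bar>y \<xi>\<bar> \<le> B" using c0_bdd assms(2) by blast
  have "bdd_above (range (\<lambda>\<xi>. \<bar>x \<xi> - y \<xi>\<bar>))"
  proof (rule bdd_aboveI2)
    fix \<xi> have "\<bar>x \<xi>\<bar> \<le> A" "\<bar>y \<xi>\<bar> \<le> B" using A B by auto
    then show "\<bar>x \<xi> - y \<xi>\<bar> \<le> A + B" by linarith
  qed
  then show ?thesis unfolding sup_dist_def by (intro cSUP_upper) auto
qed

lemma sup_dist_le:
  assumes "\<And>\<xi>. \<bar>x \<xi> - y \<xi>\<bar> \<le> c"
  shows "sup_dist x y \<le> c"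
  unfolding sup_dist_def using assms by (intro cSUP_least) auto

lemma set_diam_le:
  assumes "\<And>x y. x \<in> E \<Longrightarrow> y \<in> E \<Longrightarrow> d x y \<le> c" "0 \<le> c"
  shows "set_diam d E \<le> ereal c"
  unfolding set_diam_def using assms by (intro Sup_least) auto

lemma set_diam_ge:
  assumes "x \<in> E" "y \<in> E"
  shows "ereal (d x y) \<le> set_diam d E"
  unfolding set_diam_def using assms by (intro Sup_upper) auto

lemma set_diam_nonneg: "0 \<le> set_diam d E"
  unfolding set_diam_def by (intro Sup_upper) auto


lemma c0_fin_support:
  assumes "finite {\<xi>. x \<xi> \<noteq> 0}"
  shows "x \<in> c0"
  unfolding c0_def
proof (safe)
  fix \<eta> :: real assume "0 < \<eta>"
  then have "{\<xi>. \<eta> < \<bar>x \<xi>\<bar>} \<subseteq> {\<xi>. x \<xi> \<noteq> 0}" by auto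
  then show "finite {\<xi>. \<eta> < \<bar>x \<xi>\<bar>}" using assms finite_subset by blast
qed

lemma leb_use:
  assumes "lebesgue_num X d \<U> \<ge> ereal R" "r < R"
  obtains r' where "r < r'" "\<And>E. E \<subseteq> X \<Longrightarrow> set_diam d E < ereal r' \<Longrightarrow> \<exists>U\<in>\<U>. E \<subseteq> U"
proof -
  have "ereal r < ereal R" using assms(2) by simp
  then have "ereal r < lebesgue_num X d \<U>" using assms(1) by (rule less_le_trans)
  then obtain x where "x \<in> {ereal r | r. 0 \<le> r \<and>
     (\<forall>E. E \<subseteq> X \<and> set_diam d E < ereal r \<longrightarrow> (\<exists>U\<in>\<U>. E \<subseteq> U))}" "ereal r < x"
    unfolding lebesgue_num_def less_Sup_iff by blast
  then show ?thesis using that by auto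
qed

lemma lower_one:
  assumes inf: "infinite (UNIV::'k set)"
    and pf: "point_finite (c0::('k\<Rightarrow>real) set) \<U>"
    and leb: "lebesgue_num c0 sup_dist \<U> \<ge> ereal R" and r: "0 < r" "r < R"
  shows "\<exists>U\<in>\<U>. ereal (2*r) \<le> set_diam sup_dist U"
proof -
  obtain r' where rr: "r < r'" and P: "\<And>E. E \<subseteq> c0 \<Longrightarrow> set_diam sup_dist E < ereal r' \<Longrightarrow> \<exists>U\<in>\<U>. E \<subseteq> U"
    using leb_use[OF leb r(2)] by blast
  define G where "G k = {q \<in> (c0::('k\<Rightarrow>real) set). \<forall>\<xi>. q \<xi> \<in> (if \<xi> = k then {-r, 0} else {0, r})}" for k
  have "\<exists>U\<in>\<U>. G k \<subseteq> U" for k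
  proof (rule P)
    show "G k \<subseteq> c0" unfolding G_def by auto
    have "set_diam sup_dist (G k) \<le> ereal r"
    proof (rule set_diam_le)
      fix p q assume "p \<in> G k" "q \<in> G k"
      have "\<bar>p \<xi> - q \<xi>\<bar> \<le> r" for \<xi>
      proof -
        have "p \<xi> \<in> (if \<xi> = k then {-r, 0} else {0, r})" "q \<xi> \<in> (if \<xi> = k then {-r, 0} else {0, r})"
          using \<open>p \<in> G k\<close> \<open>q \<in> G k\<close> unfolding G_def by auto
        then show ?thesis using r by (cases "\<xi> = k") auto
      qed
      then show "sup_dist p q \<le> r" by (rule sup_dist_le)
    qed (use r in auto)
    moreover have "ereal r < ereal r'" using rr by simp
    ultimately show "set_diam sup_dist (G k) < ereal r'" by (rule le_less_trans)
  qed
  then have "\<forall>k. \<exists>U. U \<in> \<U> \<and> G k \<subseteq> U" by blast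
  from choice[OF this] obtain f where f0: "\<forall>k. f k \<in> \<U> \<and> G k \<subseteq> f k" by blast
  have f: "f k \<in> \<U> \<and> G k \<subseteq> f k" for k using f0 by blast
  have z: "(\<lambda>_. 0) \<in> (c0::('k\<Rightarrow>real) set)" by (rule c0_fin_support) simp
  then have zG: "(\<lambda>_. 0) \<in> G k" for k unfolding G_def by auto
  have "finite {U \<in> \<U>. (\<lambda>_. 0) \<in> U}" using pf z unfolding point_finite_def by blast
  moreover have "range f \<subseteq> {U \<in> \<U>. (\<lambda>_. 0) \<in> U}" using f zG by blast
  ultimately have "finite (range f)" by (rule finite_subset[rotated])
  have "\<not> inj f"
  proof
    assume "inj f"
    then have "finite (UNIV::'k set)" using finite_imageD[OF \<open>finite (range f)\<close>] by simp
    then show False using inf by simp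
  qed
  then obtain k l where kl: "k \<noteq> l" "f k = f l" unfolding inj_def by blast
  define a where "a = (\<lambda>\<xi>. if \<xi> = k then r else (0::real))"
  define b where "b = (\<lambda>\<xi>. if \<xi> = k then -r else (0::real))"
  have "{\<xi>. a \<xi> \<noteq> 0} \<subseteq> {k}" by (auto simp: a_def)
  then have "finite {\<xi>. a \<xi> \<noteq> 0}" by (rule finite_subset) simp
  then have ac: "a \<in> c0" by (rule c0_fin_support)
  have "{\<xi>. b \<xi> \<noteq> 0} \<subseteq> {k}" by (auto simp: b_def)
  then have "finite {\<xi>. b \<xi> \<noteq> 0}" by (rule finite_subset) simp
  then have bc: "b \<in> c0" by (rule c0_fin_support)
  have "a \<in> G l" unfolding G_def using ac kl(1) by (auto simp: a_def)
  then have aU: "a \<in> f k" using f kl(2) by blast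
  have "b \<in> G k" unfolding G_def using bc by (auto simp: b_def)
  then have bU: "b \<in> f k" using f by blast
  have "\<bar>a k - b k\<bar> \<le> sup_dist a b" by (rule sup_dist_ge[OF ac bc])
  then have "2 * r \<le> sup_dist a b" using r by (simp add: a_def b_def)
  then have "ereal (2*r) \<le> ereal (sup_dist a b)" by simp
  also have "\<dots> \<le> set_diam sup_dist (f k)" by (rule set_diam_ge[OF aU bU])
  finally have "ereal (2*r) \<le> set_diam sup_dist (f k)" .
  then show ?thesis using f by blast
qed


definition Iv :: "real \<Rightarrow> real \<Rightarrow> int \<Rightarrow> real set" where
  "Iv a \<delta> m = (if m = 0 then {-(a+\<delta>)..a+\<delta>}
     else if m > 0 then {\<delta> + (of_int m - 1)*a .. \<delta> + (of_int m + 1)*a}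
     else {-(\<delta> + (- of_int m + 1)*a) .. -(\<delta> + (- of_int m - 1)*a)})"

lemma Iv_len:
  assumes "u \<in> Iv a \<delta> m" "v \<in> Iv a \<delta> m" "0 \<le> a" "0 \<le> \<delta>"
  shows "\<bar>u - v\<bar> \<le> 2*a + 2*\<delta>"
  using assms by (auto simp: Iv_def algebra_simps split: if_splits)

lemma Iv_away:
  assumes "m \<noteq> 0" "u \<in> Iv a \<delta> m" "0 \<le> a" "0 \<le> \<delta>"
  shows "\<delta> \<le> \<bar>u\<bar>"
proof (cases "m > 0")
  case True
  then have "(1::real) \<le> of_int m" by simp
  then have "0 \<le> (of_int m - 1)*a" using assms(3) by simp
  moreover have "\<delta> + (of_int m - 1)*a \<le> u" using assms(2) True by (simp add: Iv_def)
  ultimately show ?thesis by linarith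
next
  case False
  then have "(1::real) \<le> - of_int m" using assms(1) by simp
  then have "0 \<le> (- of_int m - 1)*a" using assms(3) by simp
  moreover have "u \<le> -(\<delta> + (- of_int m - 1)*a)" using assms(2,1) False by (simp add: Iv_def)
  ultimately show ?thesis by linarith
qed

lemma Iv_fin:
  assumes "0 < a" "0 \<le> \<delta>"
  shows "finite {m. u \<in> Iv a \<delta> m}"
proof -
  define N where "N = \<lceil>\<bar>u\<bar>/a\<rceil> + 1"
  have Nb: "\<bar>m\<bar> \<le> N" if "u \<in> Iv a \<delta> m" for m
  proof (cases "m = 0")
    case True
    have "0 \<le> \<bar>u\<bar>/a" using assms by simp
    then show ?thesis using True unfolding N_def by simp
  next
    case False
    have "(of_int \<bar>m\<bar> - 1) * a \<le> \<bar>u\<bar>"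
      using that False assms by (auto simp: Iv_def split: if_splits)
    then have "real_of_int (\<bar>m\<bar> - 1) \<le> \<bar>u\<bar>/a" using assms(1) by (simp add: pos_le_divide_eq)
    also have "\<dots> \<le> of_int \<lceil>\<bar>u\<bar>/a\<rceil>" by (rule le_of_int_ceiling)
    finally have "\<bar>m\<bar> - 1 \<le> \<lceil>\<bar>u\<bar>/a\<rceil>" by linarith
    then show ?thesis unfolding N_def by simp
  qed
  have "{m. u \<in> Iv a \<delta> m} \<subseteq> {-N..N}"
  proof (intro subsetI)
    fix m assume "m \<in> {m. u \<in> Iv a \<delta> m}"
    then have "\<bar>m\<bar> \<le> N" using Nb by blast
    then show "m \<in> {-N..N}" by (simp add: abs_le_iff)
  qed
  then show ?thesis by (rule finite_subset) simp
qed

lemma Iv_fit: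
  assumes a: "0 < a" and dl: "0 < \<delta>" and d: "0 \<le> d" "d < a"
  shows "\<exists>m. \<forall>u. lo \<le> u \<and> u \<le> lo + d \<longrightarrow> u \<in> Iv a \<delta> m"
proof -
  consider "-(a+\<delta>) \<le> lo \<and> lo + d \<le> a + \<delta>" | "lo + d > a + \<delta>" | "lo < -(a+\<delta>)" by linarith
  then show ?thesis
  proof cases
    case 1
    then show ?thesis by (intro exI[of _ 0]) (auto simp: Iv_def)
  next
    case 2
    define f where "f = \<lfloor>(lo - \<delta>)/a\<rfloor>"
    have "of_int f \<le> (lo - \<delta>)/a" unfolding f_def by (rule of_int_floor_le)
    then have "of_int f * a \<le> (lo - \<delta>)/a * a" using a by (intro mult_right_mono) auto
    then have f1: "of_int f * a \<le> lo - \<delta>" using a by simp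
    have "(lo - \<delta>)/a < of_int f + 1" unfolding f_def by (rule real_of_int_floor_add_one_gt)
    then have "(lo - \<delta>)/a * a < (of_int f + 1) * a" using a by (intro mult_strict_right_mono) auto
    then have f2: "lo - \<delta> < (of_int f + 1) * a" using a by simp
    have "0 \<le> (lo - \<delta>)/a" using 2 d a by simp
    then have f0: "0 \<le> f" unfolding f_def by simp
    show ?thesis
    proof (intro exI[of _ "f+1"] allI impI)
      fix u assume u: "lo \<le> u \<and> u \<le> lo + d"
      show "u \<in> Iv a \<delta> (f+1)" using f0 f1 f2 u d unfolding Iv_def by (auto simp: algebra_simps)
    qed
  next
    case 3
    define b where "b = -(lo + d)"
    define f where "f = \<lfloor>(b - \<delta>)/a\<rfloor>"
    have "of_int f \<le> (b - \<delta>)/a" unfolding f_def by (rule of_int_floor_le)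
    then have "of_int f * a \<le> (b - \<delta>)/a * a" using a by (intro mult_right_mono) auto
    then have f1: "of_int f * a \<le> b - \<delta>" using a by simp
    have "(b - \<delta>)/a < of_int f + 1" unfolding f_def by (rule real_of_int_floor_add_one_gt)
    then have "(b - \<delta>)/a * a < (of_int f + 1) * a" using a by (intro mult_strict_right_mono) auto
    then have f2: "b - \<delta> < (of_int f + 1) * a" using a by simp
    have "0 \<le> (b - \<delta>)/a" using 3 d a unfolding b_def by simp
    then have f0: "0 \<le> f" unfolding f_def by simp
    show ?thesis
    proof (intro exI[of _ "-(f+1)"] allI impI)
      fix u assume u: "lo \<le> u \<and> u \<le> lo + d"
      show "u \<in> Iv a \<delta> (-(f+1))" using f0 f1 f2 u d unfolding Iv_def b_def by (auto simp: algebra_simps)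
    qed
  qed
qed


definition UU :: "real \<Rightarrow> real \<Rightarrow> ('k \<Rightarrow> int) \<Rightarrow> ('k \<Rightarrow> real) set" where
  "UU a \<delta> k = {x \<in> c0. \<forall>\<xi>. x \<xi> \<in> Iv a \<delta> (k \<xi>)}"

lemma leb_UU:
  assumes a: "0 < a" and dl: "0 < \<delta>" and E: "E \<subseteq> c0" and sd: "set_diam sup_dist E < ereal a"
  shows "\<exists>k. E \<subseteq> UU a \<delta> k"
proof (cases "E = {}")
  case True then show ?thesis by auto
next
  case False
  then obtain e where e: "e \<in> E" by blast
  obtain d where dd: "set_diam sup_dist E = ereal d"
    using set_diam_nonneg[of sup_dist E] sd by (cases "set_diam sup_dist E") auto
  have d0: "0 \<le> d" using set_diam_nonneg[of sup_dist E] dd by simp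
  have da: "d < a" using sd dd by simp
  have dist: "\<bar>y \<xi> - z \<xi>\<bar> \<le> d" if "y \<in> E" "z \<in> E" for y z \<xi>
  proof -
    have "\<bar>y \<xi> - z \<xi>\<bar> \<le> sup_dist y z" using that E by (intro sup_dist_ge) auto
    moreover have "ereal (sup_dist y z) \<le> ereal d" using set_diam_ge[OF that, of sup_dist] dd by simp
    ultimately show ?thesis by simp
  qed
  define lo where "lo \<xi> = Inf ((\<lambda>y. y \<xi>) ` E)" for \<xi>
  have bdd: "bdd_below ((\<lambda>y. y \<xi>) ` E)" for \<xi>
  proof (rule bdd_belowI2)
    fix y assume "y \<in> E"
    then have "\<bar>e \<xi> - y \<xi>\<bar> \<le> d" using dist e by blast
    then show "e \<xi> - d \<le> y \<xi>" by linarith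
  qed
  have lo1: "lo \<xi> \<le> y \<xi>" if "y \<in> E" for y \<xi>
    unfolding lo_def using bdd that by (intro cInf_lower) auto
  have lo2: "y \<xi> \<le> lo \<xi> + d" if "y \<in> E" for y \<xi>
  proof -
    have "y \<xi> - d \<le> lo \<xi>" unfolding lo_def
    proof (rule cInf_greatest)
      show "(\<lambda>y. y \<xi>) ` E \<noteq> {}" using False by simp
      fix t assume "t \<in> (\<lambda>y. y \<xi>) ` E"
      then obtain z where "z \<in> E" "t = z \<xi>" by blast
      then show "y \<xi> - d \<le> t" using dist[OF that \<open>z \<in> E\<close>, of \<xi>] by linarith
    qed
    then show ?thesis by linarith
  qed
  define k where "k \<xi> = (SOME m. \<forall>u. lo \<xi> \<le> u \<and> u \<le> lo \<xi> + d \<longrightarrow> u \<in> Iv a \<delta> m)" for \<xi>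
  have kk: "\<forall>u. lo \<xi> \<le> u \<and> u \<le> lo \<xi> + d \<longrightarrow> u \<in> Iv a \<delta> (k \<xi>)" for \<xi>
    unfolding k_def by (rule someI_ex) (rule Iv_fit[OF a dl d0 da])
  have "E \<subseteq> UU a \<delta> k"
  proof
    fix y assume y: "y \<in> E"
    have "y \<xi> \<in> Iv a \<delta> (k \<xi>)" for \<xi> using kk lo1[OF y] lo2[OF y] by blast
    then show "y \<in> UU a \<delta> k" unfolding UU_def using y E by auto
  qed
  then show ?thesis by blast
qed

lemma pf_UU:
  assumes a: "0 < a" and dl: "0 < \<delta>"
  shows "point_finite c0 (range (UU a \<delta>))"
  unfolding point_finite_def
proof
  fix x :: "'k \<Rightarrow> real" assume x: "x \<in> c0"
  define S where "S = {\<xi>. \<delta> \<le> \<bar>x \<xi>\<bar>}"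
  have "S \<subseteq> {\<xi>. \<delta>/2 < \<bar>x \<xi>\<bar>}" unfolding S_def using dl by auto
  moreover have "finite {\<xi>. \<delta>/2 < \<bar>x \<xi>\<bar>}"
  proof -
    have h: "\<forall>\<eta>>0. finite {\<xi>. \<eta> < \<bar>x \<xi>\<bar>}" using x unfolding c0_def by simp
    have "0 < \<delta>/2" using dl by simp
    then show ?thesis using h by blast
  qed
  ultimately have Sfin: "finite S" by (rule finite_subset)
  define A where "A \<xi> = {m. x \<xi> \<in> Iv a \<delta> m}" for \<xi>
  define K where "K = {k. x \<in> UU a \<delta> k}"
  have K0: "k \<xi> = 0" if "k \<in> K" "\<xi> \<notin> S" for k \<xi>
  proof (rule ccontr)
    assume "k \<xi> \<noteq> 0"
    moreover have "x \<xi> \<in> Iv a \<delta> (k \<xi>)" using that(1) unfolding K_def UU_def by auto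
    ultimately have "\<delta> \<le> \<bar>x \<xi>\<bar>" using a dl by (intro Iv_away) auto
    then show False using that(2) unfolding S_def by auto
  qed
  have "inj_on (\<lambda>k. restrict k S) K"
  proof (rule inj_onI)
    fix k l assume kl: "k \<in> K" "l \<in> K" "restrict k S = restrict l S"
    show "k = l"
    proof
      fix \<xi> show "k \<xi> = l \<xi>"
      proof (cases "\<xi> \<in> S")
        case True then show ?thesis using fun_cong[OF kl(3), of \<xi>] by simp
      next
        case False then show ?thesis using K0[OF kl(1) False] K0[OF kl(2) False] by simp
      qed
    qed
  qed
  moreover have "(\<lambda>k. restrict k S) ` K \<subseteq> PiE S A"
    unfolding K_def UU_def A_def by auto
  moreover have "finite (PiE S A)"
    using Sfin Iv_fin[OF a, of \<delta>] dl unfolding A_def by (intro finite_PiE) auto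
  ultimately have "finite K" by (meson finite_imageD finite_subset)
  moreover have "{U \<in> range (UU a \<delta>). x \<in> U} \<subseteq> UU a \<delta> ` K" unfolding K_def by auto
  ultimately show "finite {U \<in> range (UU a \<delta>). x \<in> U}" using finite_subset by blast
qed

lemma cover_UU:
  assumes a: "0 < a" and dl: "0 < \<delta>"
  shows "is_cover c0 (range (UU a \<delta>))"
  unfolding is_cover_def
proof
  show "\<forall>U\<in>range (UU a \<delta>). U \<subseteq> c0" unfolding UU_def by auto
  show "\<Union> (range (UU a \<delta>)) = c0"
  proof
    show "\<Union> (range (UU a \<delta>)) \<subseteq> c0" unfolding UU_def by auto
    show "c0 \<subseteq> \<Union> (range (UU a \<delta>))"
    proof
      fix x :: "'k \<Rightarrow> real" assume x: "x \<in> c0"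
      have "set_diam sup_dist {x} \<le> ereal 0"
        by (rule set_diam_le) (auto intro: sup_dist_le)
      then have "set_diam sup_dist {x} < ereal a" using a by (meson ereal_less(2) le_less_trans less_ereal.simps(1))
      then obtain k where "{x} \<subseteq> UU a \<delta> k" using leb_UU[OF a dl, of "{x}"] x by blast
      then show "x \<in> \<Union> (range (UU a \<delta>))" by blast
    qed
  qed
qed

lemma lebnum_UU:
  assumes a: "0 < a" and dl: "0 < \<delta>"
  shows "ereal a \<le> lebesgue_num c0 sup_dist (range (UU a \<delta>))"
  unfolding lebesgue_num_def
  by (rule Sup_upper) (use a leb_UU[OF a dl] in auto)

lemma diam_UU:
  assumes a: "0 < a" and dl: "0 < \<delta>"
  shows "cover_diam sup_dist (range (UU a \<delta>)) \<le> ereal (2*a + 2*\<delta>)"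
  unfolding cover_diam_def
proof (rule SUP_least)
  fix U assume "U \<in> range (UU a \<delta>)"
  then obtain k where U: "U = UU a \<delta> k" by blast
  show "set_diam sup_dist U \<le> ereal (2*a + 2*\<delta>)"
  proof (rule set_diam_le)
    fix x y assume "x \<in> U" "y \<in> U"
    then have "x \<xi> \<in> Iv a \<delta> (k \<xi>)" "y \<xi> \<in> Iv a \<delta> (k \<xi>)" for \<xi> unfolding U UU_def by auto
    then show "sup_dist x y \<le> 2*a + 2*\<delta>" using a dl by (intro sup_dist_le Iv_len) auto
  qed (use a dl in auto)
qed


theorem corollary3p11:
  assumes "infinite (UNIV :: 'k set)"
    and "0 \<le> R"
  shows "Delta_c (c0 :: ('k \<Rightarrow> real) set) sup_dist R = ereal (2 * R)"
proof (rule antisym)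
  show "Delta_c (c0 :: ('k \<Rightarrow> real) set) sup_dist R \<le> ereal (2 * R)"
  proof (rule ereal_le_epsilon2)
    fix e :: real assume e: "0 < e"
    define \<delta> where "\<delta> = e/4"
    define a where "a = R + \<delta>"
    have dl: "0 < \<delta>" and a: "0 < a" using e assms(2) unfolding \<delta>_def a_def by auto
    have "ereal R \<le> ereal a" unfolding a_def using dl by simp
    also have "\<dots> \<le> lebesgue_num (c0 :: ('k \<Rightarrow> real) set) sup_dist (range (UU a \<delta>))"
      by (rule lebnum_UU[OF a dl])
    finally have leb: "ereal R \<le> lebesgue_num (c0 :: ('k \<Rightarrow> real) set) sup_dist (range (UU a \<delta>))" .
    have "Delta_c (c0 :: ('k \<Rightarrow> real) set) sup_dist R \<le> cover_diam sup_dist (range (UU a \<delta> :: ('k \<Rightarrow> int) \<Rightarrow> _))"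
      unfolding Delta_c_def
      by (rule Inf_lower) (use cover_UU[OF a dl] pf_UU[OF a dl] leb in blast)
    also have "\<dots> \<le> ereal (2*a + 2*\<delta>)" by (rule diam_UU[OF a dl])
    also have "2*a + 2*\<delta> = 2*R + e" unfolding a_def \<delta>_def by simp
    finally show "Delta_c (c0 :: ('k \<Rightarrow> real) set) sup_dist R \<le> ereal (2 * R) + ereal e" by simp
  qed
  show "ereal (2 * R) \<le> Delta_c (c0 :: ('k \<Rightarrow> real) set) sup_dist R"
    unfolding Delta_c_def
  proof (rule Inf_greatest)
    fix x assume "x \<in> {cover_diam sup_dist \<U> |\<U>. is_cover (c0 :: ('k \<Rightarrow> real) set) \<U> \<and> point_finite c0 \<U>
                         \<and> ereal R \<le> lebesgue_num c0 sup_dist \<U>}"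
    then obtain \<U> where x: "x = cover_diam sup_dist \<U>" and cov: "is_cover (c0 :: ('k \<Rightarrow> real) set) \<U>"
      and pf: "point_finite c0 \<U>" and leb: "ereal R \<le> lebesgue_num c0 sup_dist \<U>" by blast
    show "ereal (2 * R) \<le> x"
    proof (cases "R = 0")
      case True
      have z: "(\<lambda>_. 0) \<in> (c0::('k\<Rightarrow>real) set)" by (rule c0_fin_support) simp
      then obtain U where U: "U \<in> \<U>" "(\<lambda>_. 0) \<in> U" using cov unfolding is_cover_def by blast
      have "0 \<le> set_diam sup_dist U" by (rule set_diam_nonneg)
      also have "\<dots> \<le> x" unfolding x cover_diam_def by (rule SUP_upper[OF U(1)])
      finally show ?thesis using True by (simp add: zero_ereal_def)
    next
      case False
      then have R: "0 < R" using assms(2) by simp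
      show ?thesis
      proof (rule ereal_le_epsilon2)
        fix e :: real assume e: "0 < e"
        define r where "r = max (R/2) (R - e/4)"
        have r: "0 < r" "r < R" "2*R \<le> 2*r + e" using R e unfolding r_def by (auto simp: max_def)
        obtain U where U: "U \<in> \<U>" "ereal (2*r) \<le> set_diam sup_dist U"
          using lower_one[OF assms(1) pf leb r(1,2)] by blast
        have "ereal (2*R) \<le> ereal (2*r) + ereal e" using r(3) by simp
        also have "\<dots> \<le> x + ereal e"
        proof (rule add_right_mono)
          show "ereal (2*r) \<le> x" using U(2) SUP_upper[OF U(1), of "set_diam sup_dist"]
            unfolding x cover_diam_def by (rule order_trans)
        qed
        finally show "ereal (2*R) \<le> x + ereal e" .
      qed
    qed
  qed
qed

end
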